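(* Either let all graphs below be undirected, or let all be directed. Let $D$ be a graph with $n$ vertices and $f(D)=f$, let $R\subseteq V(D)$ be a bad set of $D$, and let $r'\in V(D)\setminus R$. Then there is a family $(D_i)_{i\in\mathbb{N}}$ of graphs such that for every $i$: \begin{itemize} \item $n(D_i)=n+i(n-1)$; \item $f(D_i)\geq f+if$, with equality if $R$ is an inclusion-wise minimal bad set of $D$; \item the degeneracy of $D_i$ is at most $\mathrm{deg}_{\mathrm{RL}}(D,R,r')$. \end{itemize}
   Context: Undirected graphs are finite and simple; directed graphs are oriented graphs (no loops, no multiple arcs, no antiparallel arcs). $n(H)$ is the number of vertices; $f(H)$ is the minimum size of a set $F\subseteq V(H)$ such that $H-F$ has no (directed, in the directed case) cycle. A set $R\subseteq V(H)$ is bad if it is not contained in any minimum feedback vertex set of $H$. A vertex ordering $\phi:V\to\{1,\dots,|V|\}$ is a $k$-elimination ordering if every vertex has at most $k$ neighbours (in the underlying undirected graph) preceding it in $\phi$; the degeneracy of a graph is the least such $k$. For $S\subseteq V$, an ordering is $S$-last if $\phi(u)<\phi(v)$ for all $u\in S$ and $v\in V\setminus S$. Let $D_{r'\times|R|}$ be the graph obtained from $D$ by replacing $r'$ by an independent set $S$ of $|R|$ new vertices, each joined to the rest of $D$ exactly as $r'$ was (same in- and out-neighbours in the directed case, same neighbours in the undirected case). The right-left-degeneracy $\mathrm{deg}_{\mathrm{RL}}(D,R,r')$ is the minimum $k$ such that $D_{r'\times|R|}$ has an $S$-last $k$-elimination ordering. $\mathbb{N}=\{0,1,2,\dots\}$.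 *)

theory Defs
  imports Main
begin

text \<open>Undirected graphs: E is symmetric and irreflexive (each edge stored in both directions).\<close>

definition graph_ok :: "bool \<Rightarrow> 'a set \<Rightarrow> ('a \<times> 'a) set \<Rightarrow> bool" where
  "graph_ok dir V E \<longleftrightarrow> finite V \<and> E \<subseteq> V \<times> V \<and> (\<forall>v. (v, v) \<notin> E) \<and>
     (if dir then (\<forall>u v. (u, v) \<in> E \<longrightarrow> (v, u) \<notin> E)
      else (\<forall>u v. (u, v) \<in> E \<longrightarrow> (v, u) \<in> E))"

definition has_cycle :: "bool \<Rightarrow> 'a set \<Rightarrow> ('a \<times> 'a) set \<Rightarrow> bool" where
  "has_cycle dir V E \<longleftrightarrow> (\<exists>vs. distinct vs \<and> set vs \<subseteq> V \<and>
     length vs \<ge> (if dir then 2 else 3) \<and>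
     (\<forall>i < length vs. (vs ! i, vs ! ((i + 1) mod length vs)) \<in> E))"

definition is_fvs :: "bool \<Rightarrow> 'a set \<Rightarrow> ('a \<times> 'a) set \<Rightarrow> 'a set \<Rightarrow> bool" where
  "is_fvs dir V E F \<longleftrightarrow> F \<subseteq> V \<and> \<not> has_cycle dir (V - F) E"

definition fvn :: "bool \<Rightarrow> 'a set \<Rightarrow> ('a \<times> 'a) set \<Rightarrow> nat" where
  "fvn dir V E = (LEAST k. \<exists>F. is_fvs dir V E F \<and> card F = k)"

definition min_fvs :: "bool \<Rightarrow> 'a set \<Rightarrow> ('a \<times> 'a) set \<Rightarrow> 'a set \<Rightarrow> bool" where
  "min_fvs dir V E F \<longleftrightarrow> is_fvs dir V E F \<and> card F = fvn dir V E"

definition bad_set :: "bool \<Rightarrow> 'a set \<Rightarrow> ('a \<times> 'a) set \<Rightarrow> 'a set \<Rightarrow> bool" where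
  "bad_set dir V E R \<longleftrightarrow> R \<subseteq> V \<and> \<not> (\<exists>F. min_fvs dir V E F \<and> R \<subseteq> F)"

definition minimal_bad_set :: "bool \<Rightarrow> 'a set \<Rightarrow> ('a \<times> 'a) set \<Rightarrow> 'a set \<Rightarrow> bool" where
  "minimal_bad_set dir V E R \<longleftrightarrow> bad_set dir V E R \<and> (\<forall>R'. R' \<subset> R \<longrightarrow> \<not> bad_set dir V E R')"

definition elim_ordering :: "'a set \<Rightarrow> ('a \<times> 'a) set \<Rightarrow> nat \<Rightarrow> ('a \<Rightarrow> nat) \<Rightarrow> bool" where
  "elim_ordering V E k \<phi> \<longleftrightarrow> bij_betw \<phi> V {1..card V} \<and>
     (\<forall>v\<in>V. card {u \<in> V. ((u, v) \<in> E \<or> (v, u) \<in> E) \<and> \<phi> u < \<phi> v} \<le> k)"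

definition degeneracy :: "'a set \<Rightarrow> ('a \<times> 'a) set \<Rightarrow> nat" where
  "degeneracy V E = (LEAST k. \<exists>\<phi>. elim_ordering V E k \<phi>)"

definition S_last :: "'a set \<Rightarrow> 'a set \<Rightarrow> ('a \<Rightarrow> nat) \<Rightarrow> bool" where
  "S_last V S \<phi> \<longleftrightarrow> (\<forall>u\<in>S. \<forall>v\<in>V - S. \<phi> u < \<phi> v)"

text \<open>D_{r' x m}: replace r' by an independent set of m new vertices Inr 0, ..., Inr (m-1),
  each with the same in-/out-neighbours (neighbours) as r'.\<close>

definition blowup_V :: "'a set \<Rightarrow> 'a \<Rightarrow> nat \<Rightarrow> ('a + nat) set" where
  "blowup_V V r m = Inl ` (V - {r}) \<union> Inr ` {..<m}"

definition blowup_E :: "('a \<times> 'a) set \<Rightarrow> 'a \<Rightarrow> nat \<Rightarrow> (('a + nat) \<times> ('a + nat)) set" where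
  "blowup_E E r m =
     {(Inl u, Inl v) | u v. (u, v) \<in> E \<and> u \<noteq> r \<and> v \<noteq> r} \<union>
     {(Inr j, Inl v) | j v. j < m \<and> (r, v) \<in> E \<and> v \<noteq> r} \<union>
     {(Inl u, Inr j) | u j. j < m \<and> (u, r) \<in> E \<and> u \<noteq> r}"

definition deg_RL :: "'a set \<Rightarrow> ('a \<times> 'a) set \<Rightarrow> 'a set \<Rightarrow> 'a \<Rightarrow> nat" where
  "deg_RL V E R r = (LEAST k. \<exists>\<phi>.
     elim_ordering (blowup_V V r (card R)) (blowup_E E r (card R)) k \<phi> \<and>
     S_last (blowup_V V r (card R)) (Inr ` {..<card R}) \<phi>)"

end

theory Submission
  imports Defs
begin


definition cyc :: "bool \<Rightarrow> 'a set \<Rightarrow> ('a \<times> 'a) set \<Rightarrow> 'a list \<Rightarrow> bool" where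
  "cyc dir V E vs \<longleftrightarrow> distinct vs \<and> set vs \<subseteq> V \<and>
     length vs \<ge> (if dir then 2 else 3) \<and>
     (\<forall>i < length vs. (vs ! i, vs ! ((i + 1) mod length vs)) \<in> E)"

lemma has_cycle_cyc: "has_cycle dir V E \<longleftrightarrow> (\<exists>vs. cyc dir V E vs)"
  unfolding has_cycle_def cyc_def by blast

lemma cyc_map:
  assumes "cyc dir U E vs" "inj_on g (set vs)" "g ` set vs \<subseteq> U2"
    "\<forall>u\<in>set vs. \<forall>v\<in>set vs. (u,v)\<in>E \<longrightarrow> (g u, g v)\<in>E2"
  shows "cyc dir U2 E2 (map g vs)"
proof -
  have d: "distinct vs" and L: "length vs \<ge> (if dir then 2 else 3)" and
    ed: "\<forall>i < length vs. (vs ! i, vs ! ((i + 1) mod length vs)) \<in> E"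
    using assms(1) unfolding cyc_def by auto
  have "\<forall>i < length vs. (map g vs ! i, map g vs ! ((i + 1) mod length vs)) \<in> E2"
  proof (intro allI impI)
    fix i assume i: "i < length vs"
    have m: "(i + 1) mod length vs < length vs" using i by (metis mod_less_divisor gr_implies_not0 not_gr0)
    have "vs ! i \<in> set vs" "vs ! ((i + 1) mod length vs) \<in> set vs" using i m by auto
    then show "(map g vs ! i, map g vs ! ((i + 1) mod length vs)) \<in> E2"
      using assms(4) ed i m by auto
  qed
  then show ?thesis using d L assms(2,3) unfolding cyc_def by (auto simp: distinct_map)
qed

lemma cyc_mono: "cyc dir U E vs \<Longrightarrow> set vs \<subseteq> U2 \<Longrightarrow> (\<forall>u\<in>set vs. \<forall>v\<in>set vs. (u,v)\<in>E \<longrightarrow> (u, v)\<in>E2) \<Longrightarrow> cyc dir U2 E2 vs"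
  using cyc_map[of dir U E vs id U2 E2] by simp

lemma cyc_rotate:
  assumes "cyc dir U E vs"
  shows "cyc dir U E (rotate p vs)"
proof -
  let ?L = "length vs"
  have ed: "\<forall>i < ?L. (vs ! i, vs ! ((i + 1) mod ?L)) \<in> E" using assms unfolding cyc_def by auto
  have "\<forall>i < ?L. (rotate p vs ! i, rotate p vs ! ((i + 1) mod ?L)) \<in> E"
  proof (intro allI impI)
    fix i assume i: "i < ?L"
    have m: "(i + 1) mod ?L < ?L" using i by (metis mod_less_divisor gr_implies_not0 not_gr0)
    have j: "(p + i) mod ?L < ?L" using i by (metis mod_less_divisor gr_implies_not0 not_gr0)
    have "rotate p vs ! i = vs ! ((p + i) mod ?L)" using nth_rotate i by blast
    moreover have "rotate p vs ! ((i + 1) mod ?L) = vs ! ((p + (i + 1) mod ?L) mod ?L)"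
      using nth_rotate m by blast
    moreover have "(p + (i + 1) mod ?L) mod ?L = ((p + i) mod ?L + 1) mod ?L"
      by (metis add.assoc mod_add_left_eq mod_add_right_eq)
    ultimately show "(rotate p vs ! i, rotate p vs ! ((i + 1) mod ?L)) \<in> E"
      using ed j by simp
  qed
  then show ?thesis using assms unfolding cyc_def by simp
qed

lemma cut0:
  assumes "cyc dir U E vs"
    and c1: "\<forall>u\<in>set vs. \<forall>v\<in>set vs. (u,v)\<in>E \<longrightarrow> u \<in> A \<longrightarrow> v \<notin> A \<longrightarrow> v = c"
    and c2: "\<forall>u\<in>set vs. \<forall>v\<in>set vs. (u,v)\<in>E \<longrightarrow> u \<notin> A \<longrightarrow> v \<in> A \<longrightarrow> u = c"
    and h0: "vs ! 0 \<in> A"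
  shows "set vs \<subseteq> A \<union> {c}"
proof (rule ccontr)
  let ?L = "length vs"
  have d: "distinct vs" and ed: "\<forall>i < ?L. (vs ! i, vs ! ((i + 1) mod ?L)) \<in> E"
    and L2: "?L \<ge> 2"
    using assms(1) unfolding cyc_def by (auto split: if_splits)
  assume "\<not> set vs \<subseteq> A \<union> {c}"
  then obtain q where q: "q < ?L" "vs ! q \<notin> A" "vs ! q \<noteq> c" by (metis UnI1 UnI2 in_set_conv_nth singletonI subsetI)
  define a where "a = (LEAST j. vs ! j \<notin> A)"
  have aq: "a \<le> q" unfolding a_def using q(2) by (rule Least_le)
  have aA: "vs ! a \<notin> A" unfolding a_def using q(2) by (rule LeastI)
  have a0: "a \<noteq> 0" using aA h0 by (metis)
  have prevA: "vs ! (a - 1) \<in> A" using a0 not_less_Least[of "a - 1" "\<lambda>j. vs ! j \<notin> A"] unfolding a_def by auto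
  have "(vs ! (a - 1), vs ! ((a - 1 + 1) mod ?L)) \<in> E" using ed aq q(1) by auto
  moreover have "(a - 1 + 1) mod ?L = a" using a0 aq q(1) by auto
  ultimately have ac: "vs ! a = c" using c1 prevA aA aq q(1)
    by (metis le_less_trans less_imp_diff_less nth_mem)
  have aq': "a < q" using aq ac q(3) le_neq_implies_less by blast
  define B where "B = {j. j < ?L \<and> vs ! j \<notin> A}"
  have fB: "finite B" unfolding B_def by auto
  have qB: "q \<in> B" unfolding B_def using q by auto
  define b where "b = Max B"
  have bB: "b \<in> B" unfolding b_def using Max_in[OF fB] qB by blast
  have qb: "q \<le> b" unfolding b_def using fB qB by simp
  have bL: "b < ?L" and bA: "vs ! b \<notin> A" using bB unfolding B_def by auto
  have nxt: "vs ! ((b + 1) mod ?L) \<in> A"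
  proof (cases "b + 1 < ?L")
    case True
    then have "b + 1 \<notin> B" using Max_ge[OF fB, of "b+1"] unfolding b_def by fastforce
    then show ?thesis using True unfolding B_def by auto
  next
    case False
    then have "b + 1 = ?L" using bL by auto
    then show ?thesis using h0 by simp
  qed
  have "(vs ! b, vs ! ((b + 1) mod ?L)) \<in> E" using ed bL by auto
  moreover have "(b + 1) mod ?L < ?L" using bL by (metis mod_less_divisor gr_implies_not0 not_gr0)
  ultimately have bc: "vs ! b = c" using c2 bA nxt bL by (meson nth_mem)
  have "a = b" using d ac bc aq' qb bL by (metis nth_eq_iff_index_eq less_trans order.strict_trans1)
  then show False using aq' qb by simp
qed

lemma cut:
  assumes "cyc dir U E vs"
    and c1: "\<forall>u\<in>set vs. \<forall>v\<in>set vs. (u,v)\<in>E \<longrightarrow> u \<in> A \<longrightarrow> v \<notin> A \<longrightarrow> v = c"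
    and c2: "\<forall>u\<in>set vs. \<forall>v\<in>set vs. (u,v)\<in>E \<longrightarrow> u \<notin> A \<longrightarrow> v \<in> A \<longrightarrow> u = c"
    and h0: "x \<in> set vs" "x \<in> A"
  shows "set vs \<subseteq> A \<union> {c}"
proof -
  obtain p where p: "p < length vs" "vs ! p = x" using h0 by (meson in_set_conv_nth)
  have "vs \<noteq> []" using p by auto
  then have "rotate p vs ! 0 = x" using p nth_rotate[of 0 vs p] by simp
  moreover have "cyc dir U E (rotate p vs)" using cyc_rotate assms(1) by blast
  ultimately have "set (rotate p vs) \<subseteq> A \<union> {c}" using cut0[of dir U E "rotate p vs" A c] c1 c2 h0 by auto
  then show ?thesis by simp
qed



lemma fvs_self: "finite V \<Longrightarrow> is_fvs dir V E V"
  unfolding is_fvs_def has_cycle_def by (auto split: if_splits)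

lemma fvn_le: "is_fvs dir V E F \<Longrightarrow> fvn dir V E \<le> card F"
  unfolding fvn_def by (rule Least_le) blast

lemma fvn_ex: "finite V \<Longrightarrow> \<exists>F. is_fvs dir V E F \<and> card F = fvn dir V E"
  unfolding fvn_def by (rule LeastI_ex) (use fvs_self in blast)

definition rank_ok :: "'a set \<Rightarrow> ('a \<times> 'a) set \<Rightarrow> nat \<Rightarrow> ('a \<Rightarrow> nat) \<Rightarrow> bool" where
  "rank_ok V E k \<rho> \<longleftrightarrow> inj_on \<rho> V \<and>
     (\<forall>v\<in>V. card {u \<in> V. ((u, v) \<in> E \<or> (v, u) \<in> E) \<and> \<rho> u < \<rho> v} \<le> k)"

lemma rank_compress:
  fixes \<rho> :: "'a \<Rightarrow> nat"
  assumes "finite V" "inj_on \<rho> V"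
  shows "\<exists>\<phi>. bij_betw \<phi> V {1..card V} \<and> (\<forall>u\<in>V. \<forall>v\<in>V. \<phi> u < \<phi> v \<longleftrightarrow> \<rho> u < \<rho> v)"
proof -
  define \<phi> where "\<phi> v = card {u\<in>V. \<rho> u < \<rho> v} + 1" for v
  have mono: "\<phi> u < \<phi> v" if "u \<in> V" "v \<in> V" "\<rho> u < \<rho> v" for u v
  proof -
    have s1: "{w\<in>V. \<rho> w < \<rho> u} \<subseteq> {w\<in>V. \<rho> w < \<rho> v}" using that(3) by (auto intro: less_trans)
    have s2: "u \<in> {w\<in>V. \<rho> w < \<rho> v}" "u \<notin> {w\<in>V. \<rho> w < \<rho> u}" using that by auto
    have "{w\<in>V. \<rho> w < \<rho> u} \<subset> {w\<in>V. \<rho> w < \<rho> v}" using s1 s2 by blast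
    then have "card {w\<in>V. \<rho> w < \<rho> u} < card {w\<in>V. \<rho> w < \<rho> v}"
      by (rule psubset_card_mono[rotated]) (use assms(1) in auto)
    then show ?thesis unfolding \<phi>_def by simp
  qed
  have iff: "\<forall>u\<in>V. \<forall>v\<in>V. \<phi> u < \<phi> v \<longleftrightarrow> \<rho> u < \<rho> v"
  proof (intro ballI iffI)
    fix u v assume uv: "u \<in> V" "v \<in> V" "\<phi> u < \<phi> v"
    show "\<rho> u < \<rho> v"
    proof (rule ccontr)
      assume "\<not> \<rho> u < \<rho> v"
      then have "\<rho> v < \<rho> u \<or> \<rho> v = \<rho> u" by auto
      then show False
      proof
        assume "\<rho> v < \<rho> u" then show False using mono[of v u] uv by simp
      next
        assume "\<rho> v = \<rho> u" then have "v = u" using inj_onD[OF assms(2)] uv(1,2) by blast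
        then show False using uv by simp
      qed
    qed
  qed (rule mono)
  have inj: "inj_on \<phi> V"
  proof (rule inj_onI)
    fix u v assume "u \<in> V" "v \<in> V" "\<phi> u = \<phi> v"
    show "u = v"
    proof (rule ccontr)
      assume "u \<noteq> v"
      then have "\<rho> u \<noteq> \<rho> v" using \<open>u \<in> V\<close> \<open>v \<in> V\<close> inj_onD[OF assms(2)] by blast
      then have "\<rho> u < \<rho> v \<or> \<rho> v < \<rho> u" by auto
      then show False using mono[of u v] mono[of v u] \<open>u \<in> V\<close> \<open>v \<in> V\<close> \<open>\<phi> u = \<phi> v\<close> by auto
    qed
  qed
  have sub: "\<phi> ` V \<subseteq> {1..card V}"
  proof
    fix y assume "y \<in> \<phi> ` V"
    then obtain v where v: "v \<in> V" "y = \<phi> v" by auto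
    have "{u\<in>V. \<rho> u < \<rho> v} \<subset> V" using v by auto
    then have "card {u\<in>V. \<rho> u < \<rho> v} < card V" by (rule psubset_card_mono[rotated]) (use assms(1) in auto)
    then show "y \<in> {1..card V}" using v unfolding \<phi>_def by auto
  qed
  have "\<phi> ` V = {1..card V}"
  proof (rule card_subset_eq)
    show "card (\<phi> ` V) = card {1..card V}" using inj by (simp add: card_image)
  qed (use sub in auto)
  then show ?thesis using inj iff unfolding bij_betw_def by blast
qed

lemma degeneracy_le:
  assumes "finite V" "rank_ok V E k \<rho>"
  shows "degeneracy V E \<le> k"
proof -
  obtain \<phi> where \<phi>: "bij_betw \<phi> V {1..card V}" "\<forall>u\<in>V. \<forall>v\<in>V. \<phi> u < \<phi> v \<longleftrightarrow> \<rho> u < \<rho> v"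
    using rank_compress assms unfolding rank_ok_def by blast
  have "\<forall>v\<in>V. {u \<in> V. ((u, v) \<in> E \<or> (v, u) \<in> E) \<and> \<phi> u < \<phi> v} = {u \<in> V. ((u, v) \<in> E \<or> (v, u) \<in> E) \<and> \<rho> u < \<rho> v}"
    using \<phi>(2) by auto
  then have "elim_ordering V E k \<phi>" using \<phi>(1) assms(2) unfolding elim_ordering_def rank_ok_def by simp
  then show ?thesis unfolding degeneracy_def by (intro Least_le) blast
qed

lemma has_cycle_iso_back:
  assumes "inj_on h W" "E \<subseteq> W \<times> W" "U \<subseteq> W" "has_cycle dir (h ` U) (map_prod h h ` E)"
  shows "has_cycle dir U E"
proof -
  obtain ws where ws: "cyc dir (h ` U) (map_prod h h ` E) ws" using assms(4) has_cycle_cyc by blast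
  let ?g = "inv_into W h"
  have sw: "set ws \<subseteq> h ` U" using ws unfolding cyc_def by auto
  have "cyc dir U E (map ?g ws)"
  proof (rule cyc_map[OF ws])
    show "inj_on ?g (set ws)" using sw assms(3) inj_on_inv_into[of "set ws" h W] by blast
    show "?g ` set ws \<subseteq> U" using sw assms(1,3) by (auto simp: inv_into_f_f subset_iff)
    show "\<forall>u\<in>set ws. \<forall>v\<in>set ws. (u, v) \<in> map_prod h h ` E \<longrightarrow> (?g u, ?g v) \<in> E"
    proof (intro ballI impI)
      fix a b assume "(a, b) \<in> map_prod h h ` E"
      then obtain u v where "(u,v) \<in> E" "a = h u" "b = h v" by auto
      moreover then have "u \<in> W" "v \<in> W" using assms(2) by auto
      ultimately show "(?g a, ?g b) \<in> E" using assms(1) by (simp add: inv_into_f_f)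
    qed
  qed
  then show ?thesis using has_cycle_cyc by blast
qed

lemma fvn_iso_le:
  assumes "inj_on h W" "E \<subseteq> W \<times> W" "finite W"
  shows "fvn dir (h ` W) (map_prod h h ` E) \<le> fvn dir W E"
proof -
  obtain F where F: "is_fvs dir W E F" "card F = fvn dir W E" using fvn_ex assms(3) by blast
  have "is_fvs dir (h ` W) (map_prod h h ` E) (h ` F)"
    unfolding is_fvs_def
  proof
    show "h ` F \<subseteq> h ` W" using F unfolding is_fvs_def by auto
    have "h ` W - h ` F = h ` (W - F)" using assms(1) F(1) unfolding is_fvs_def by (simp add: inj_on_image_set_diff)
    then show "\<not> has_cycle dir (h ` W - h ` F) (map_prod h h ` E)"
      using has_cycle_iso_back[OF assms(1,2), of "W - F" dir] F(1) unfolding is_fvs_def by auto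
  qed
  then have "fvn dir (h ` W) (map_prod h h ` E) \<le> card (h ` F)" by (rule fvn_le)
  also have "\<dots> \<le> card F" using F(1) assms(3) unfolding is_fvs_def by (meson card_image_le finite_subset)
  finally show ?thesis using F(2) by simp
qed

lemma fvn_iso:
  assumes "inj_on h W" "E \<subseteq> W \<times> W" "finite W"
  shows "fvn dir (h ` W) (map_prod h h ` E) = fvn dir W E"
proof -
  let ?g = "inv_into W h"
  let ?E = "map_prod h h ` E"
  have i: "inj_on ?g (h ` W)" by (rule inj_on_inv_into) simp
  have gW: "?g ` h ` W = W" using assms(1) by (rule inv_into_image_cancel) simp
  have gE: "map_prod ?g ?g ` ?E = E"
  proof -
    have "map_prod ?g ?g ` ?E = (map_prod ?g ?g \<circ> map_prod h h) ` E" by (simp add: image_comp)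
    also have "\<dots> = id ` E"
    proof (rule image_cong[OF refl])
      fix p assume "p \<in> E"
      then show "(map_prod ?g ?g \<circ> map_prod h h) p = id p" using assms(1,2) by (cases p) (auto simp: inv_into_f_f)
    qed
    also have "\<dots> = E" by simp
    finally show ?thesis .
  qed
  have "fvn dir (?g ` h ` W) (map_prod ?g ?g ` ?E) \<le> fvn dir (h ` W) ?E"
    by (rule fvn_iso_le[OF i]) (use assms in auto)
  then have "fvn dir W E \<le> fvn dir (h ` W) ?E" using gW gE by simp
  with fvn_iso_le[OF assms, of dir] show ?thesis by simp
qed

lemma rank_ok_iso:
  assumes "inj_on h W" "E \<subseteq> W \<times> W" "finite W" "rank_ok W E k \<rho>"
  shows "rank_ok (h ` W) (map_prod h h ` E) k (\<rho> \<circ> inv_into W h)"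
  unfolding rank_ok_def
proof
  let ?g = "inv_into W h"
  show "inj_on (\<rho> \<circ> ?g) (h ` W)"
    using assms(1,4) unfolding rank_ok_def
    by (metis comp_inj_on inj_on_inv_into inv_into_image_cancel subset_refl)
  show "\<forall>v\<in>h ` W. card {u \<in> h ` W. ((u, v) \<in> map_prod h h ` E \<or> (v, u) \<in> map_prod h h ` E) \<and> (\<rho> \<circ> ?g) u < (\<rho> \<circ> ?g) v} \<le> k"
  proof
    fix v' assume "v' \<in> h ` W"
    then obtain v where v: "v \<in> W" "v' = h v" by auto
    have eq: "(h a, h b) \<in> map_prod h h ` E \<longleftrightarrow> (a, b) \<in> E" if "a \<in> W" "b \<in> W" for a b
    proof
      assume "(h a, h b) \<in> map_prod h h ` E"
      then obtain c d where "(c,d) \<in> E" "h a = h c" "h b = h d" by auto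
      moreover then have "c \<in> W" "d \<in> W" using assms(2) by auto
      ultimately show "(a,b) \<in> E" using assms(1) that by (metis inj_onD)
    qed auto
    have "{u \<in> h ` W. ((u, v') \<in> map_prod h h ` E \<or> (v', u) \<in> map_prod h h ` E) \<and> (\<rho> \<circ> ?g) u < (\<rho> \<circ> ?g) v'}
       = h ` {u \<in> W. ((u, v) \<in> E \<or> (v, u) \<in> E) \<and> \<rho> u < \<rho> v}"
    proof -
      have g: "{u \<in> h ` W. Q u} = h ` {u\<in>W. Q (h u)}" for Q by auto
      have "{u\<in>W. ((h u, h v) \<in> map_prod h h ` E \<or> (h v, h u) \<in> map_prod h h ` E) \<and> (\<rho> \<circ> ?g) (h u) < (\<rho> \<circ> ?g) (h v)}
        = {u \<in> W. ((u, v) \<in> E \<or> (v, u) \<in> E) \<and> \<rho> u < \<rho> v}"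
      proof (rule Collect_cong)
        fix u
        show "(u \<in> W \<and> ((h u, h v) \<in> map_prod h h ` E \<or> (h v, h u) \<in> map_prod h h ` E) \<and> (\<rho> \<circ> ?g) (h u) < (\<rho> \<circ> ?g) (h v)) =
              (u \<in> W \<and> ((u, v) \<in> E \<or> (v, u) \<in> E) \<and> \<rho> u < \<rho> v)"
          by (cases "u \<in> W") (simp_all add: eq v(1) inv_into_f_f assms(1))
      qed
      then show ?thesis unfolding v(2) by (simp only: g)
    qed
    moreover have "card (h ` {u \<in> W. ((u, v) \<in> E \<or> (v, u) \<in> E) \<and> \<rho> u < \<rho> v}) = card {u \<in> W. ((u, v) \<in> E \<or> (v, u) \<in> E) \<and> \<rho> u < \<rho> v}"
      by (rule card_image) (rule inj_on_subset[OF assms(1)], auto)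
    ultimately show "card {u \<in> h ` W. ((u, v') \<in> map_prod h h ` E \<or> (v', u) \<in> map_prod h h ` E) \<and> (\<rho> \<circ> ?g) u < (\<rho> \<circ> ?g) v'} \<le> k"
      using assms(4) v unfolding rank_ok_def by simp
  qed
qed

lemma graph_ok_iso:
  assumes "inj_on h W" "graph_ok dir W E"
  shows "graph_ok dir (h ` W) (map_prod h h ` E)"
proof -
  have E: "E \<subseteq> W \<times> W" using assms(2) unfolding graph_ok_def by auto
  have eq: "(h a, h b) \<in> map_prod h h ` E \<longleftrightarrow> (a, b) \<in> E" if "a \<in> W" "b \<in> W" for a b
  proof
    assume "(h a, h b) \<in> map_prod h h ` E"
    then obtain c d where "(c,d) \<in> E" "h a = h c" "h b = h d" by auto
    moreover then have "c \<in> W" "d \<in> W" using E by auto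
    ultimately show "(a,b) \<in> E" using assms(1) that by (metis inj_onD)
  qed auto
  have irr: "\<forall>v. (v, v) \<notin> map_prod h h ` E"
  proof (intro allI notI)
    fix v assume "(v, v) \<in> map_prod h h ` E"
    then obtain x y where xy: "(x,y) \<in> E" "h x = v" "h y = v" by auto
    then have "x \<in> W" "y \<in> W" using E by auto
    then have "x = y" using xy assms(1) by (metis inj_onD)
    then show False using xy assms(2) unfolding graph_ok_def by auto
  qed
  have dr: "(u, v) \<in> map_prod h h ` E \<longrightarrow> (v, u) \<notin> map_prod h h ` E" if "dir" for u v
  proof
    assume "(u, v) \<in> map_prod h h ` E"
    then obtain x y where xy: "(x,y) \<in> E" "u = h x" "v = h y" by auto
    then have "x \<in> W" "y \<in> W" using E by auto
    then show "(v, u) \<notin> map_prod h h ` E" using xy eq that assms(2) unfolding graph_ok_def by auto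
  qed
  have ud: "(u, v) \<in> map_prod h h ` E \<longrightarrow> (v, u) \<in> map_prod h h ` E" if "\<not> dir" for u v
  proof
    assume "(u, v) \<in> map_prod h h ` E"
    then obtain x y where xy: "(x,y) \<in> E" "u = h x" "v = h y" by auto
    then have "x \<in> W" "y \<in> W" using E by auto
    then show "(v, u) \<in> map_prod h h ` E" using xy eq that assms(2) unfolding graph_ok_def by auto
  qed
  show ?thesis unfolding graph_ok_def using irr dr ud E assms(2) unfolding graph_ok_def by auto
qed



lemma badR:
  assumes "bad_set dir V E R" "is_fvs dir V E G" "R \<subseteq> G"
  shows "fvn dir V E + 1 \<le> card G"
proof -
  have "fvn dir V E \<le> card G" using fvn_le assms(2) by blast
  moreover have "card G \<noteq> fvn dir V E"
    using assms unfolding bad_set_def min_fvs_def by blast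
  ultimately show ?thesis by simp
qed

lemma fvs_pull:
  assumes "is_fvs dir V2 E2 F" "inj_on g U" "g ` U \<subseteq> V2"
    "\<forall>u\<in>U. \<forall>v\<in>U. (u,v)\<in>E \<longrightarrow> (g u, g v) \<in> E2"
  shows "\<not> has_cycle dir (U - {u\<in>U. g u \<in> F}) E"
proof
  assume "has_cycle dir (U - {u\<in>U. g u \<in> F}) E"
  then obtain vs where vs: "cyc dir (U - {u\<in>U. g u \<in> F}) E vs" using has_cycle_cyc by blast
  have sv: "set vs \<subseteq> U - {u\<in>U. g u \<in> F}" using vs unfolding cyc_def by auto
  have "cyc dir (V2 - F) E2 (map g vs)"
  proof (rule cyc_map[OF vs])
    show "inj_on g (set vs)" using assms(2) sv by (meson Diff_subset inj_on_subset subset_trans)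
    show "g ` set vs \<subseteq> V2 - F" using sv assms(3) by auto
    show "\<forall>u\<in>set vs. \<forall>v\<in>set vs. (u, v) \<in> E \<longrightarrow> (g u, g v) \<in> E2" using sv assms(4) by blast
  qed
  then show False using assms(1) has_cycle_cyc unfolding is_fvs_def by blast
qed

locale constr =
  fixes dir :: bool and V :: "'a set" and E :: "('a \<times> 'a) set" and R :: "'a set" and r :: 'a
  assumes gok: "graph_ok dir V E" and RV: "R \<subseteq> V" and rV: "r \<in> V" and rR: "r \<notin> R"
begin

definition Wc :: "nat \<Rightarrow> (nat \<times> 'a) set" where
  "Wc i = {p. fst p \<le> i \<and> snd p \<in> V \<and> (fst p = 0 \<or> snd p \<noteq> r)}"

definition Ec :: "nat \<Rightarrow> ((nat \<times> 'a) \<times> (nat \<times> 'a)) set" where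
  "Ec i = {(p,q). p \<in> Wc i \<and> q \<in> Wc i \<and>
     ((fst p = fst q \<and> (snd p, snd q) \<in> E) \<or>
      (fst q = Suc (fst p) \<and> snd p \<in> R \<and> (r, snd q) \<in> E) \<or>
      (fst p = Suc (fst q) \<and> snd q \<in> R \<and> (snd p, r) \<in> E))}"

lemma finV: "finite V" using gok unfolding graph_ok_def by auto
lemma EV: "E \<subseteq> V \<times> V" using gok unfolding graph_ok_def by auto
lemma irr: "(v, v) \<notin> E" using gok unfolding graph_ok_def by auto

lemma Wc0: "Wc 0 = Pair 0 ` V" unfolding Wc_def by auto

lemma WcSuc: "Wc (Suc i) = Wc i \<union> Pair (Suc i) ` (V - {r})"
  unfolding Wc_def by auto

lemma Wc_disj: "Wc i \<inter> Pair (Suc i) ` (V - {r}) = {}"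
  unfolding Wc_def by auto

lemma Wc_fin: "finite (Wc i)"
proof -
  have "Wc i \<subseteq> {..i} \<times> V" unfolding Wc_def by auto
  then show ?thesis using finV finite_subset by blast
qed

lemma Wc_card: "card (Wc i) = card V + i * (card V - 1)"
proof (induction i)
  case 0 then show ?case by (simp add: Wc0 card_image inj_on_def)
next
  case (Suc i)
  have "card (Wc (Suc i)) = card (Wc i) + card (Pair (Suc i) ` (V - {r}))"
    unfolding WcSuc by (rule card_Un_disjoint) (use Wc_fin finV Wc_disj in auto)
  also have "card (Pair (Suc i) ` (V - {r})) = card V - 1"
    by (subst card_image) (auto simp: inj_on_def finV rV)
  finally show ?case using Suc by simp
qed

lemma Ec_sub: "Ec i \<subseteq> Wc i \<times> Wc i" unfolding Ec_def by auto

lemma Ec_mono: "Ec i \<subseteq> Ec (Suc i)" unfolding Ec_def Wc_def by auto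

lemma Ec_restr: "(p, q) \<in> Ec (Suc i) \<Longrightarrow> p \<in> Wc i \<Longrightarrow> q \<in> Wc i \<Longrightarrow> (p, q) \<in> Ec i"
  unfolding Ec_def by auto

lemma Wc_graph: "graph_ok dir (Wc i) (Ec i)"
proof -
  have i1: "\<forall>v. (v, v) \<notin> Ec i" unfolding Ec_def using irr by auto
  have i2: "dir \<Longrightarrow> (\<forall>u v. (u, v) \<in> Ec i \<longrightarrow> (v, u) \<notin> Ec i)"
    using gok unfolding graph_ok_def Ec_def by auto
  have i3: "\<not> dir \<Longrightarrow> (\<forall>u v. (u, v) \<in> Ec i \<longrightarrow> (v, u) \<in> Ec i)"
    using gok unfolding graph_ok_def Ec_def by auto
  show ?thesis unfolding graph_ok_def using Wc_fin Ec_sub i1 i2 i3 by auto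
qed

lemma LB:
  assumes bad: "bad_set dir V E R"
  shows "is_fvs dir (Wc i) (Ec i) F \<Longrightarrow> Suc i * fvn dir V E \<le> card F \<and>
           (Pair i ` R \<subseteq> F \<longrightarrow> Suc i * fvn dir V E + 1 \<le> card F)"
proof (induction i arbitrary: F)
  case 0
  let ?G = "{v\<in>V. (0, v) \<in> F}"
  have Fs: "F \<subseteq> Wc 0" using 0 unfolding is_fvs_def by auto
  have "\<not> has_cycle dir (V - {v\<in>V. Pair 0 v \<in> F}) E"
  proof (rule fvs_pull[OF 0])
    show "inj_on (Pair 0) V" by (simp add: inj_on_def)
    show "Pair 0 ` V \<subseteq> Wc 0" by (simp add: Wc0)
    show "\<forall>u\<in>V. \<forall>v\<in>V. (u, v) \<in> E \<longrightarrow> ((0, u), (0, v)) \<in> Ec 0"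
      unfolding Ec_def Wc0 by auto
  qed
  then have G: "is_fvs dir V E ?G" unfolding is_fvs_def by auto
  define G0 where "G0 = ?G"
  have FG: "F = Pair 0 ` G0" using Fs unfolding Wc0 G0_def by auto
  have cG0: "card F = card G0" unfolding FG by (rule card_image) (simp add: inj_on_def)
  then have cG: "card F = card ?G" unfolding G0_def .
  show ?case
  proof
    show "Suc 0 * fvn dir V E \<le> card F" using fvn_le[OF G] cG by simp
    show "Pair 0 ` R \<subseteq> F \<longrightarrow> Suc 0 * fvn dir V E + 1 \<le> card F"
    proof
      assume "Pair 0 ` R \<subseteq> F"
      then have "R \<subseteq> ?G" using RV by auto
      then show "Suc 0 * fvn dir V E + 1 \<le> card F" using badR[OF bad G] cG by simp
    qed
  qed
next
  case (Suc i)
  let ?f = "fvn dir V E"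
  have Fs: "F \<subseteq> Wc (Suc i)" and nc: "\<not> has_cycle dir (Wc (Suc i) - F) (Ec (Suc i))"
    using Suc.prems unfolding is_fvs_def by auto
  define F1 where "F1 = F \<inter> Wc i"
  define F2 where "F2 = F \<inter> Pair (Suc i) ` (V - {r})"
  have cF: "card F = card F1 + card F2"
  proof -
    have "F = F1 \<union> F2" using Fs unfolding F1_def F2_def WcSuc by auto
    moreover have "finite F1" "finite F2" "F1 \<inter> F2 = {}"
      unfolding F1_def F2_def using Wc_fin finV Wc_disj by auto
    ultimately show ?thesis by (simp add: card_Un_disjoint)
  qed
  have F1: "is_fvs dir (Wc i) (Ec i) F1"
  proof -
    have "\<not> has_cycle dir (Wc i - {u\<in>Wc i. id u \<in> F}) (Ec i)"
    proof (rule fvs_pull[OF Suc.prems])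
      show "id ` Wc i \<subseteq> Wc (Suc i)" unfolding WcSuc by auto
      show "\<forall>u\<in>Wc i. \<forall>v\<in>Wc i. (u, v) \<in> Ec i \<longrightarrow> (id u, id v) \<in> Ec (Suc i)"
        using Ec_mono by auto
    qed simp
    moreover have "Wc i - {u\<in>Wc i. id u \<in> F} = Wc i - F1" unfolding F1_def by auto
    ultimately show ?thesis unfolding is_fvs_def F1_def by auto
  qed
  note IH = Suc.IH[OF F1]
  define G2 where "G2 = {v \<in> V - {r}. (Suc i, v) \<in> F}"
  have cF2: "card F2 = card G2"
  proof -
    have "F2 = Pair (Suc i) ` G2" unfolding F2_def G2_def by auto
    then show ?thesis by (simp add: card_image inj_on_def)
  qed
  show ?case
  proof (cases "\<exists>x\<in>R. (i, x) \<notin> F")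
    case True
    then obtain x where x: "x \<in> R" "(i, x) \<notin> F" by auto
    define g where "g v = (if v = r then (i, x) else (Suc i, v))" for v
    have "\<not> has_cycle dir (V - {v\<in>V. g v \<in> F}) E"
    proof (rule fvs_pull[OF Suc.prems])
      show "inj_on g V" unfolding g_def inj_on_def by auto
      show "g ` V \<subseteq> Wc (Suc i)" unfolding g_def Wc_def using x RV rR by auto
      show "\<forall>u\<in>V. \<forall>v\<in>V. (u, v) \<in> E \<longrightarrow> (g u, g v) \<in> Ec (Suc i)"
        unfolding g_def Ec_def Wc_def using x RV rR irr by auto
    qed
    moreover have gg: "{v\<in>V. g v \<in> F} = G2" unfolding g_def G2_def using x by auto
    ultimately have G: "is_fvs dir V E G2" unfolding is_fvs_def G2_def by auto
    have a: "?f \<le> card F2" using fvn_le[OF G] cF2 by simp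
    have b: "Pair (Suc i) ` R \<subseteq> F \<Longrightarrow> ?f + 1 \<le> card F2"
    proof -
      assume "Pair (Suc i) ` R \<subseteq> F"
      then have "R \<subseteq> G2" unfolding G2_def using RV rR by auto
      then show ?thesis using badR[OF bad G] cF2 by simp
    qed
    show ?thesis using IH a b cF by auto
  next
    case False
    then have iR: "Pair i ` R \<subseteq> F1" unfolding F1_def Wc_def using RV rR by auto
    have IH2: "Suc i * ?f + 1 \<le> card F1" using IH iR by auto
    have "\<not> has_cycle dir ((V - {r}) - {v\<in>V - {r}. Pair (Suc i) v \<in> F}) E"
    proof (rule fvs_pull[OF Suc.prems])
      show "inj_on (Pair (Suc i)) (V - {r})" by (simp add: inj_on_def)
      show "Pair (Suc i) ` (V - {r}) \<subseteq> Wc (Suc i)" unfolding WcSuc by auto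
      show "\<forall>u\<in>V - {r}. \<forall>v\<in>V - {r}. (u, v) \<in> E \<longrightarrow> ((Suc i, u), (Suc i, v)) \<in> Ec (Suc i)"
        unfolding Ec_def Wc_def by auto
    qed
    moreover have "(V - {r}) - {v\<in>V - {r}. Pair (Suc i) v \<in> F} = V - insert r G2"
      unfolding G2_def by auto
    ultimately have G: "is_fvs dir V E (insert r G2)" unfolding is_fvs_def G2_def using rV by auto
    have cG: "card (insert r G2) = card G2 + 1"
    proof -
      have "finite G2" "r \<notin> G2" unfolding G2_def using finV by auto
      then show ?thesis by simp
    qed
    have a: "?f \<le> card F2 + 1" using fvn_le[OF G] cF2 cG by simp
    have b: "Pair (Suc i) ` R \<subseteq> F \<Longrightarrow> ?f \<le> card F2"
    proof -
      assume "Pair (Suc i) ` R \<subseteq> F"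
      then have "R \<subseteq> insert r G2" unfolding G2_def using RV rR by auto
      then show ?thesis using badR[OF bad G] cF2 cG by simp
    qed
    show ?thesis using IH2 a b cF by auto
  qed
qed


definition Fs :: "'a \<Rightarrow> 'a set \<Rightarrow> nat \<Rightarrow> (nat \<times> 'a) set" where
  "Fs x F i = {p \<in> Wc i. snd p \<in> F \<or> (fst p < i \<and> snd p = x \<and> r \<in> F)}"

lemma UB_fvs:
  assumes F: "is_fvs dir V E F" and x: "x \<in> R" "x \<notin> F" and RF: "R - {x} \<subseteq> F"
  shows "is_fvs dir (Wc i) (Ec i) (Fs x F i)"
proof (induction i)
  case 0
  have "\<not> has_cycle dir (Wc 0 - Fs x F 0) (Ec 0)"
  proof
    assume "has_cycle dir (Wc 0 - Fs x F 0) (Ec 0)"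
    then obtain vs where vs: "cyc dir (Wc 0 - Fs x F 0) (Ec 0) vs" using has_cycle_cyc by blast
    have sv: "set vs \<subseteq> Wc 0 - Fs x F 0" using vs unfolding cyc_def by auto
    have "cyc dir (V - F) E (map snd vs)"
    proof (rule cyc_map[OF vs])
      show "inj_on snd (set vs)" using sv unfolding Wc0 inj_on_def by auto
      show "snd ` set vs \<subseteq> V - F" using sv unfolding Wc0 Fs_def by auto
      show "\<forall>u\<in>set vs. \<forall>v\<in>set vs. (u, v) \<in> Ec 0 \<longrightarrow> (snd u, snd v) \<in> E"
        unfolding Ec_def Wc_def by auto
    qed
    then show False using F has_cycle_cyc unfolding is_fvs_def by blast
  qed
  then show ?case unfolding is_fvs_def Fs_def by auto
next
  case (Suc i)
  have IH: "\<not> has_cycle dir (Wc i - Fs x F i) (Ec i)" using Suc.IH unfolding is_fvs_def by auto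
  have "\<not> has_cycle dir (Wc (Suc i) - Fs x F (Suc i)) (Ec (Suc i))"
  proof
    assume "has_cycle dir (Wc (Suc i) - Fs x F (Suc i)) (Ec (Suc i))"
    then obtain vs where vs: "cyc dir (Wc (Suc i) - Fs x F (Suc i)) (Ec (Suc i)) vs" using has_cycle_cyc by blast
    have sv: "set vs \<subseteq> Wc (Suc i) - Fs x F (Suc i)" using vs unfolding cyc_def by auto
    show False
    proof (cases "\<exists>p\<in>set vs. fst p = Suc i")
      case True
      then obtain p where p: "p \<in> set vs" "fst p = Suc i" by auto
      let ?A = "{p. fst p = Suc i}"
      let ?c = "(i, x)"
      have sub: "set vs \<subseteq> ?A \<union> {?c}"
      proof (rule cut[OF vs _ _ p(1)])
        show "p \<in> ?A" using p by simp
        show "\<forall>u\<in>set vs. \<forall>v\<in>set vs. (u, v) \<in> Ec (Suc i) \<longrightarrow> u \<in> ?A \<longrightarrow> v \<notin> ?A \<longrightarrow> v = ?c"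
        proof (intro ballI impI)
          fix u v assume uv: "u \<in> set vs" "v \<in> set vs" "(u, v) \<in> Ec (Suc i)" "u \<in> ?A" "v \<notin> ?A"
          then have "fst v = i" "snd v \<in> R" unfolding Ec_def Wc_def by auto
          moreover have "v \<notin> Fs x F (Suc i)" "v \<in> Wc (Suc i)" using uv sv by auto
          ultimately show "v = ?c" using RF unfolding Fs_def by (cases v) auto
        qed
        show "\<forall>u\<in>set vs. \<forall>v\<in>set vs. (u, v) \<in> Ec (Suc i) \<longrightarrow> u \<notin> ?A \<longrightarrow> v \<in> ?A \<longrightarrow> u = ?c"
        proof (intro ballI impI)
          fix u v assume uv: "u \<in> set vs" "v \<in> set vs" "(u, v) \<in> Ec (Suc i)" "u \<notin> ?A" "v \<in> ?A"
          then have "fst u = i" "snd u \<in> R" unfolding Ec_def Wc_def by auto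
          moreover have "u \<notin> Fs x F (Suc i)" "u \<in> Wc (Suc i)" using uv sv by auto
          ultimately show "u = ?c" using RF unfolding Fs_def by (cases u) auto
        qed
      qed
      define psi where "psi q = (if fst q = Suc i then snd q else r)" for q :: "nat \<times> 'a"
      have cnot: "?c \<in> set vs \<Longrightarrow> r \<notin> F"
      proof -
        assume "?c \<in> set vs"
        then have "?c \<notin> Fs x F (Suc i)" "?c \<in> Wc (Suc i)" using sv by auto
        then show "r \<notin> F" unfolding Fs_def by auto
      qed
      have "cyc dir (V - F) E (map psi vs)"
      proof (rule cyc_map[OF vs])
        show "inj_on psi (set vs)"
        proof (rule inj_onI)
          fix u v assume uv: "u \<in> set vs" "v \<in> set vs" "psi u = psi v"
          have w: "u \<in> Wc (Suc i)" "v \<in> Wc (Suc i)" using uv sv by auto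
          have m: "u \<in> ?A \<union> {?c}" "v \<in> ?A \<union> {?c}" using uv sub by auto
          have nr: "q \<in> ?A \<Longrightarrow> q \<in> Wc (Suc i) \<Longrightarrow> snd q \<noteq> r" for q unfolding Wc_def by auto
          have pA: "q \<in> ?A \<Longrightarrow> psi q = snd q" for q unfolding psi_def by simp
          have pc: "psi ?c = r" unfolding psi_def by simp
          show "u = v"
          proof (cases "u \<in> ?A")
            case uA: True
            show ?thesis
            proof (cases "v \<in> ?A")
              case True
              then show ?thesis using uA uv(3) pA[of u] pA[of v] by (simp add: prod_eq_iff)
            next
              case False
              then have "v = ?c" using m by blast
              then show ?thesis using uA uv(3) pA[of u] pc nr[of u] w by simp
            qed
          next
            case uA: False
            then have uc: "u = ?c" using m by blast
            show ?thesis
            proof (cases "v \<in> ?A")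
              case True
              then show ?thesis using uc uv(3) pA[of v] pc nr[of v] w by simp
            next
              case False
              then show ?thesis using uc m by blast
            qed
          qed
        qed
        show "psi ` set vs \<subseteq> V - F"
        proof
          fix y assume "y \<in> psi ` set vs"
          then obtain q where q: "q \<in> set vs" "y = psi q" by auto
          have "q \<in> Wc (Suc i)" "q \<notin> Fs x F (Suc i)" using q sv by auto
          then show "y \<in> V - F" using q sub cnot rV unfolding psi_def Wc_def Fs_def by (cases q) (auto split: if_splits)
        qed
        show "\<forall>u\<in>set vs. \<forall>v\<in>set vs. (u, v) \<in> Ec (Suc i) \<longrightarrow> (psi u, psi v) \<in> E"
        proof (intro ballI impI)
          fix u v assume uv: "u \<in> set vs" "v \<in> set vs" "(u, v) \<in> Ec (Suc i)"
          then have "u \<in> ?A \<union> {?c}" "v \<in> ?A \<union> {?c}" using sub by auto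
          then show "(psi u, psi v) \<in> E" using uv(3) irr unfolding psi_def Ec_def by auto
        qed
      qed
      then show False using F has_cycle_cyc unfolding is_fvs_def by blast
    next
      case False
      have sv2: "set vs \<subseteq> Wc i - Fs x F i"
      proof
        fix q assume q: "q \<in> set vs"
        then have "q \<in> Wc (Suc i)" "q \<notin> Fs x F (Suc i)" "fst q \<noteq> Suc i" using sv False by auto
        then show "q \<in> Wc i - Fs x F i" unfolding Wc_def Fs_def by auto
      qed
      have "cyc dir (Wc i - Fs x F i) (Ec i) vs"
        by (rule cyc_mono[OF vs sv2]) (use sv2 Ec_restr in blast)
      then show False using IH has_cycle_cyc by blast
    qed
  qed
  then show ?case unfolding is_fvs_def Fs_def by auto
qed

lemma UB_card:
  assumes F: "is_fvs dir V E F" and x: "x \<in> R" "x \<notin> F"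
  shows "card (Fs x F i) \<le> Suc i * card F"
proof (induction i)
  case 0
  have sub: "Fs x F 0 \<subseteq> Pair 0 ` F" unfolding Fs_def Wc_def by auto
  have finF: "finite F" using F finV unfolding is_fvs_def by (auto intro: finite_subset)
  then have "finite (Pair (0::nat) ` F)" by simp
  then have "card (Fs x F 0) \<le> card (Pair (0::nat) ` F)" using sub by (rule card_mono)
  also have "\<dots> \<le> card F" using finF by (rule card_image_le)
  finally show ?case by simp
next
  case (Suc i)
  define X where "X = (if r \<in> F then {(i, x)} else {})"
  define Y where "Y = Pair (Suc i) ` (F - {r})"
  have finF: "finite F" using F finV unfolding is_fvs_def by (auto intro: finite_subset)
  have sub: "Fs x F (Suc i) \<subseteq> (Fs x F i \<union> X) \<union> Y"
    unfolding Fs_def Wc_def X_def Y_def by (auto simp: less_Suc_eq)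
  have "finite (Fs x F i)" unfolding Fs_def using Wc_fin by simp
  then have "finite ((Fs x F i \<union> X) \<union> Y)" using finF unfolding X_def Y_def by simp
  then have "card (Fs x F (Suc i)) \<le> card ((Fs x F i \<union> X) \<union> Y)" using sub by (rule card_mono)
  also have "\<dots> \<le> card (Fs x F i) + card X + card Y"
    by (meson add_le_mono1 card_Un_le le_trans)
  also have "card X + card Y \<le> card F"
  proof (cases "r \<in> F")
    case True
    have "card Y = card (F - {r})" unfolding Y_def by (rule card_image) (simp add: inj_on_def)
    also have "\<dots> = card F - 1" using True finF by simp
    moreover have "card F > 0" using True finF card_gt_0_iff by blast
    ultimately show ?thesis using True unfolding X_def by simp
  next
    case False
    have "card Y = card (F - {r})" unfolding Y_def by (rule card_image) (simp add: inj_on_def)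
    then show ?thesis using False unfolding X_def by simp
  qed
  ultimately show ?case using Suc.IH by simp
qed


abbreviation "bV \<equiv> blowup_V V r (card R)"
abbreviation "bE \<equiv> blowup_E E r (card R)"
abbreviation "SS \<equiv> Inr ` {..<card R} :: ('a + nat) set"

definition bmap :: "'a \<Rightarrow> 'a + nat" where
  "bmap v = (if v = r then Inr 0 else Inl v)"

lemma finR: "finite R" using RV finV finite_subset by blast

lemma bV_fin: "finite bV" unfolding blowup_V_def using finV by simp

lemma bmap_in: "R \<noteq> {} \<Longrightarrow> v \<in> V \<Longrightarrow> bmap v \<in> bV"
  unfolding bmap_def blowup_V_def using finR by (auto simp: card_gt_0_iff)

lemma bmap_inj: "inj_on bmap V" unfolding bmap_def inj_on_def by auto

lemma bmap_edge:
  assumes "R \<noteq> {}" "(u, v) \<in> E"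
  shows "(bmap u, bmap v) \<in> bE"
proof -
  have c: "0 < card R" using assms(1) finR by (simp add: card_gt_0_iff)
  have "u \<noteq> v" using assms(2) irr by auto
  then show ?thesis using assms(2) c unfolding bmap_def blowup_E_def by auto
qed

lemma deg_RL_ex: "\<exists>k \<phi>. elim_ordering bV bE k \<phi> \<and> S_last bV SS \<phi>"
proof -
  obtain g :: "'a \<Rightarrow> nat" and n where g: "g ` V = {i. i < n}" "inj_on g V"
    using finite_imp_inj_to_nat_seg[OF finV] by blast
  define \<rho>0 where "\<rho>0 = case_sum (\<lambda>v. card R + g v) (\<lambda>j. j)"
  have inj0: "inj_on \<rho>0 bV"
  proof (rule inj_onI)
    fix a b assume ab: "a \<in> bV" "b \<in> bV" "\<rho>0 a = \<rho>0 b"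
    then show "a = b" using g(2) unfolding \<rho>0_def blowup_V_def
      by (auto dest: inj_onD)
  qed
  obtain \<phi> where \<phi>: "bij_betw \<phi> bV {1..card bV}" "\<forall>u\<in>bV. \<forall>v\<in>bV. \<phi> u < \<phi> v \<longleftrightarrow> \<rho>0 u < \<rho>0 v"
    using rank_compress[OF bV_fin inj0] by blast
  have "elim_ordering bV bE (card bV) \<phi>"
    unfolding elim_ordering_def
  proof
    show "bij_betw \<phi> bV {1..card bV}" by (rule \<phi>(1))
    show "\<forall>v\<in>bV. card {u \<in> bV. ((u, v) \<in> bE \<or> (v, u) \<in> bE) \<and> \<phi> u < \<phi> v} \<le> card bV"
      using bV_fin by (intro ballI card_mono) auto
  qed
  moreover have "S_last bV SS \<phi>"
    unfolding S_last_def
  proof (intro ballI)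
    fix u v assume u: "u \<in> SS" and v: "v \<in> bV - SS"
    then obtain j where j: "u = Inr j" "j < card R" by auto
    obtain w where w: "v = Inl w" using v unfolding blowup_V_def by auto
    have "u \<in> bV" using j unfolding blowup_V_def by auto
    moreover have "\<rho>0 u < \<rho>0 v" using j w unfolding \<rho>0_def by simp
    ultimately show "\<phi> u < \<phi> v" using \<phi>(2) v by blast
  qed
  ultimately show ?thesis by blast
qed

lemma div_lemma:
  fixes a a' s s' M :: nat
  assumes "a * M + s < a' * M + s'" "s < M" "s' < M"
  shows "a \<le> a'"
proof (rule ccontr)
  assume "\<not> a \<le> a'"
  then have "Suc a' \<le> a" by simp
  then have "Suc a' * M \<le> a * M" by (rule mult_le_mono1)
  then show False using assms by simp
qed

lemma div_lemma2:
  fixes a a' s s' M :: nat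
  assumes "a * M + s = a' * M + s'" "s < M" "s' < M"
  shows "a = a' \<and> s = s'"
proof -
  have "(a * M + s) div M = a" "(a * M + s) mod M = s" using assms(2) by auto
  moreover have "(a' * M + s') div M = a'" "(a' * M + s') mod M = s'" using assms(3) by auto
  ultimately show ?thesis using assms(1) by metis
qed

lemma DG:
  assumes Rne: "R \<noteq> {}"
  shows "\<exists>\<rho>. rank_ok (Wc i) (Ec i) (deg_RL V E R r) \<rho>"
proof -
  let ?K = "deg_RL V E R r"
  have "\<exists>\<phi>. elim_ordering bV bE ?K \<phi> \<and> S_last bV SS \<phi>"
    unfolding deg_RL_def by (rule LeastI_ex) (rule deg_RL_ex)
  then obtain \<phi> where el: "elim_ordering bV bE ?K \<phi>" and sl: "S_last bV SS \<phi>" by blast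
  have bij: "bij_betw \<phi> bV {1..card bV}" using el unfolding elim_ordering_def by auto
  have cnt: "\<forall>v\<in>bV. card {u \<in> bV. ((u, v) \<in> bE \<or> (v, u) \<in> bE) \<and> \<phi> u < \<phi> v} \<le> ?K"
    using el unfolding elim_ordering_def by auto
  define M where "M = Suc (card bV)"
  define \<sigma> where "\<sigma> v = \<phi> (bmap v)" for v
  define \<rho> where "\<rho> p = fst p * M + \<sigma> (snd p)" for p :: "nat \<times> 'a"
  have \<sigma>M: "\<sigma> v < M" if "v \<in> V" for v
  proof -
    have "\<phi> (bmap v) \<in> {1..card bV}" using bij bmap_in[OF Rne that] unfolding bij_betw_def by auto
    then show ?thesis unfolding \<sigma>_def M_def by auto
  qed
  have \<sigma>inj: "inj_on \<sigma> V"
    unfolding \<sigma>_def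
  proof (rule comp_inj_on[OF bmap_inj, unfolded comp_def])
    show "inj_on \<phi> (bmap ` V)"
      using bij unfolding bij_betw_def by (rule inj_on_subset[OF conjunct1]) (use bmap_in[OF Rne] in auto)
  qed
  have \<rho>inj: "inj_on \<rho> (Wc i)"
  proof (rule inj_onI)
    fix p q assume pq: "p \<in> Wc i" "q \<in> Wc i" "\<rho> p = \<rho> q"
    have V: "snd p \<in> V" "snd q \<in> V" using pq unfolding Wc_def by auto
    have "fst p = fst q \<and> \<sigma> (snd p) = \<sigma> (snd q)"
      using div_lemma2[OF pq(3)[unfolded \<rho>_def] \<sigma>M[OF V(1)] \<sigma>M[OF V(2)]] .
    then have "fst p = fst q" "snd p = snd q" using \<sigma>inj V inj_onD by metis+
    then show "p = q" by (simp add: prod_eq_iff)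
  qed
  obtain idx where idx: "bij_betw idx R {0..<card R}" using ex_bij_betw_finite_nat[OF finR] by blast
  have "\<forall>w\<in>Wc i. card {u \<in> Wc i. ((u, w) \<in> Ec i \<or> (w, u) \<in> Ec i) \<and> \<rho> u < \<rho> w} \<le> ?K"
  proof
    fix w assume w: "w \<in> Wc i"
    obtain k v where kv: "w = (k, v)" by (cases w)
    have vV: "v \<in> V" and kr: "k = 0 \<or> v \<noteq> r" using w kv unfolding Wc_def by auto
    define Sw where "Sw = {u \<in> Wc i. ((u, w) \<in> Ec i \<or> (w, u) \<in> Ec i) \<and> \<rho> u < \<rho> w}"
    define Bw where "Bw = {u \<in> bV. ((u, bmap v) \<in> bE \<or> (bmap v, u) \<in> bE) \<and> \<phi> u < \<phi> (bmap v)}"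
    define \<mu> where "\<mu> u = (if fst u = k then bmap (snd u) else Inr (idx (snd u)))" for u :: "nat \<times> 'a"
    have cases: "(fst u = k \<and> ((snd u, v) \<in> E \<or> (v, snd u) \<in> E) \<and> \<sigma> (snd u) < \<sigma> v) \<or>
                 (k = Suc (fst u) \<and> snd u \<in> R \<and> v \<noteq> r \<and> ((r, v) \<in> E \<or> (v, r) \<in> E))"
      if u: "u \<in> Sw" for u
    proof -
      have uW: "u \<in> Wc i" and adj: "(u, w) \<in> Ec i \<or> (w, u) \<in> Ec i" and lt: "\<rho> u < \<rho> w"
        using u unfolding Sw_def by auto
      have uV: "snd u \<in> V" using uW unfolding Wc_def by auto
      have lt': "fst u * M + \<sigma> (snd u) < k * M + \<sigma> v" using lt kv unfolding \<rho>_def by simp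
      have le: "fst u \<le> k" using div_lemma[OF lt' \<sigma>M[OF uV] \<sigma>M[OF vV]] .
      show ?thesis
      proof (cases "fst u = k")
        case True
        then have "\<sigma> (snd u) < \<sigma> v" using lt' by simp
        moreover have "(snd u, v) \<in> E \<or> (v, snd u) \<in> E" using adj True kv unfolding Ec_def by auto
        ultimately show ?thesis using True by blast
      next
        case False
        then have "k = Suc (fst u) \<and> snd u \<in> R \<and> ((r, v) \<in> E \<or> (v, r) \<in> E)"
          using adj kv le unfolding Ec_def by auto
        moreover then have "v \<noteq> r" using kr by auto
        ultimately show ?thesis by blast
      qed
    qed
    have img: "\<mu> ` Sw \<subseteq> Bw"
    proof
      fix y assume "y \<in> \<mu> ` Sw"
      then obtain u where u: "u \<in> Sw" "y = \<mu> u" by auto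
      have uV: "snd u \<in> V" using u unfolding Sw_def Wc_def by auto
      from cases[OF u(1)] show "y \<in> Bw"
      proof
        assume c: "fst u = k \<and> ((snd u, v) \<in> E \<or> (v, snd u) \<in> E) \<and> \<sigma> (snd u) < \<sigma> v"
        then have y: "y = bmap (snd u)" using u unfolding \<mu>_def by simp
        have "(bmap (snd u), bmap v) \<in> bE \<or> (bmap v, bmap (snd u)) \<in> bE"
          using c bmap_edge[OF Rne] by blast
        then show "y \<in> Bw" using y c bmap_in[OF Rne uV] unfolding Bw_def \<sigma>_def by simp
      next
        assume c: "k = Suc (fst u) \<and> snd u \<in> R \<and> v \<noteq> r \<and> ((r, v) \<in> E \<or> (v, r) \<in> E)"
        define j where "j = idx (snd u)"
        have j: "j < card R" using c idx unfolding j_def bij_betw_def by auto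
        have y: "y = Inr j" using u c unfolding \<mu>_def j_def by simp
        have bv: "bmap v = Inl v" using c unfolding bmap_def by simp
        have inS: "Inr j \<in> SS" using j by auto
        have inV: "Inr j \<in> bV" "Inl v \<in> bV" using j c vV unfolding blowup_V_def by auto
        have nS: "Inl v \<notin> SS" by auto
        have "\<phi> (Inr j) < \<phi> (Inl v)" using sl inS inV nS unfolding S_last_def by blast
        moreover have "(Inr j, Inl v) \<in> bE \<or> (Inl v, Inr j) \<in> bE"
          using c j unfolding blowup_E_def by auto
        ultimately show "y \<in> Bw" using y bv inV unfolding Bw_def by simp
      qed
    qed
    have inj: "inj_on \<mu> Sw"
    proof (rule inj_onI)
      fix u1 u2 assume u: "u1 \<in> Sw" "u2 \<in> Sw" "\<mu> u1 = \<mu> u2"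
      have uV: "snd u1 \<in> V" "snd u2 \<in> V" using u unfolding Sw_def Wc_def by auto
      have r1: "snd u1 = r \<Longrightarrow> fst u1 = 0" "snd u2 = r \<Longrightarrow> fst u2 = 0" using u unfolding Sw_def Wc_def by auto
      note c1 = cases[OF u(1)] and c2 = cases[OF u(2)]
      show "u1 = u2"
      proof (cases "fst u1 = k")
        case T1: True
        show ?thesis
        proof (cases "fst u2 = k")
          case True
          then have "bmap (snd u1) = bmap (snd u2)" using T1 u(3) unfolding \<mu>_def by simp
          then have "snd u1 = snd u2" using bmap_inj uV inj_onD by metis
          then show ?thesis using T1 True by (simp add: prod_eq_iff)
        next
          case False
          then have k2: "k = Suc (fst u2)" using c2 by blast
          have "bmap (snd u1) = Inr (idx (snd u2))" using T1 False u(3) unfolding \<mu>_def by simp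
          then have "snd u1 = r" unfolding bmap_def by (auto split: if_splits)
          then have "fst u1 = 0" using r1 by blast
          then show ?thesis using T1 k2 by simp
        qed
      next
        case F1: False
        then have k1: "k = Suc (fst u1)" and R1: "snd u1 \<in> R" using c1 by blast+
        show ?thesis
        proof (cases "fst u2 = k")
          case True
          have "bmap (snd u2) = Inr (idx (snd u1))" using F1 True u(3) unfolding \<mu>_def by simp
          then have "snd u2 = r" unfolding bmap_def by (auto split: if_splits)
          then have "fst u2 = 0" using r1 by blast
          then show ?thesis using True k1 by simp
        next
          case False
          then have k2: "k = Suc (fst u2)" and R2: "snd u2 \<in> R" using c2 by blast+
          have "idx (snd u1) = idx (snd u2)" using F1 False u(3) unfolding \<mu>_def by simp
          then have "snd u1 = snd u2" using idx R1 R2 unfolding bij_betw_def by (metis inj_onD)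
          then show ?thesis using k1 k2 by (simp add: prod_eq_iff)
        qed
      qed
    qed
    have finB: "finite Bw" unfolding Bw_def using bV_fin by simp
    have "card Sw \<le> card Bw" using card_inj_on_le[OF inj img finB] .
    also have "card Bw \<le> ?K" unfolding Bw_def using cnt bmap_in[OF Rne vV] by blast
    finally show "card {u \<in> Wc i. ((u, w) \<in> Ec i \<or> (w, u) \<in> Ec i) \<and> \<rho> u < \<rho> w} \<le> ?K"
      unfolding Sw_def .
  qed
  then show ?thesis using \<rho>inj unfolding rank_ok_def by blast
qed

end


theorem mainTheorem11:
  fixes dir :: bool and V :: "'a set" and E :: "('a \<times> 'a) set" and R :: "'a set" and r' :: 'a
  assumes "graph_ok dir V E"
    and "bad_set dir V E R"
    and "r' \<in> V - R"
  shows "\<exists>(VV :: nat \<Rightarrow> nat set) (EE :: nat \<Rightarrow> (nat \<times> nat) set). \<forall>i.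
           graph_ok dir (VV i) (EE i) \<and>
           card (VV i) = card V + i * (card V - 1) \<and>
           fvn dir (VV i) (EE i) \<ge> fvn dir V E + i * fvn dir V E \<and>
           (minimal_bad_set dir V E R \<longrightarrow> fvn dir (VV i) (EE i) = fvn dir V E + i * fvn dir V E) \<and>
           degeneracy (VV i) (EE i) \<le> deg_RL V E R r'"
proof -
  have RV: "R \<subseteq> V" using assms(2) unfolding bad_set_def by auto
  interpret C: constr dir V E R r'
    by unfold_locales (use assms RV in auto)
  have finV: "finite V" by (rule C.finV)
  have Rne: "R \<noteq> {}"
  proof
    assume "R = {}"
    obtain F where "is_fvs dir V E F" "card F = fvn dir V E" using fvn_ex[OF finV] by blast
    then show False using assms(2) \<open>R = {}\<close> unfolding bad_set_def min_fvs_def by blast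
  qed
  obtain g :: "'a \<Rightarrow> nat" and n where g: "g ` V = {i. i < n}" "inj_on g V"
    using finite_imp_inj_to_nat_seg[OF finV] by blast
  define h where "h p = fst p * n + g (snd p)" for p :: "nat \<times> 'a"
  have hinj: "inj_on h (C.Wc i)" for i
  proof (rule inj_onI)
    fix p q assume pq: "p \<in> C.Wc i" "q \<in> C.Wc i" "h p = h q"
    have V: "snd p \<in> V" "snd q \<in> V" using pq unfolding C.Wc_def by auto
    have lt: "g (snd p) < n" "g (snd q) < n" using g(1) V by auto
    have "fst p = fst q \<and> g (snd p) = g (snd q)"
      using C.div_lemma2[OF pq(3)[unfolded h_def] lt] .
    moreover then have "snd p = snd q" using g(2) V inj_onD by metis
    ultimately show "p = q" by (simp add: prod_eq_iff)
  qed
  define VV where "VV i = h ` C.Wc i" for i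
  define EE where "EE i = map_prod h h ` C.Ec i" for i
  let ?f = "fvn dir V E"
  have "graph_ok dir (VV i) (EE i) \<and>
           card (VV i) = card V + i * (card V - 1) \<and>
           fvn dir (VV i) (EE i) \<ge> ?f + i * ?f \<and>
           (minimal_bad_set dir V E R \<longrightarrow> fvn dir (VV i) (EE i) = ?f + i * ?f) \<and>
           degeneracy (VV i) (EE i) \<le> deg_RL V E R r'" for i
  proof (intro conjI impI)
    show "graph_ok dir (VV i) (EE i)" unfolding VV_def EE_def
      by (rule graph_ok_iso[OF hinj C.Wc_graph])
    show "card (VV i) = card V + i * (card V - 1)" unfolding VV_def
      using card_image[OF hinj] C.Wc_card by simp
    have fe: "fvn dir (VV i) (EE i) = fvn dir (C.Wc i) (C.Ec i)" unfolding VV_def EE_def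
      by (rule fvn_iso[OF hinj C.Ec_sub C.Wc_fin])
    obtain F where F: "is_fvs dir (C.Wc i) (C.Ec i) F" "card F = fvn dir (C.Wc i) (C.Ec i)"
      using fvn_ex[OF C.Wc_fin] by blast
    have lb: "Suc i * ?f \<le> fvn dir (C.Wc i) (C.Ec i)" using C.LB[OF assms(2) F(1)] F(2) by simp
    then show "?f + i * ?f \<le> fvn dir (VV i) (EE i)" using fe by simp
    assume mb: "minimal_bad_set dir V E R"
    obtain x where x: "x \<in> R" using Rne by blast
    have "\<not> bad_set dir V E (R - {x})" using mb x unfolding minimal_bad_set_def by blast
    then obtain F0 where F0: "min_fvs dir V E F0" "R - {x} \<subseteq> F0" using RV unfolding bad_set_def by blast
    have xF: "x \<notin> F0"
    proof
      assume "x \<in> F0"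
      then have "R \<subseteq> F0" using F0(2) by blast
      then show False using assms(2) F0(1) unfolding bad_set_def by blast
    qed
    have F0f: "is_fvs dir V E F0" "card F0 = ?f" using F0(1) unfolding min_fvs_def by auto
    have "fvn dir (C.Wc i) (C.Ec i) \<le> card (C.Fs x F0 i)"
      by (rule fvn_le[OF C.UB_fvs[OF F0f(1) x xF F0(2)]])
    also have "\<dots> \<le> Suc i * card F0" by (rule C.UB_card[OF F0f(1) x xF])
    finally have "fvn dir (C.Wc i) (C.Ec i) \<le> Suc i * ?f" using F0f(2) by simp
    with lb fe show "fvn dir (VV i) (EE i) = ?f + i * ?f" by simp
  next
    obtain \<rho> where \<rho>: "rank_ok (C.Wc i) (C.Ec i) (deg_RL V E R r') \<rho>" using C.DG[OF Rne] by blast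
    have "rank_ok (VV i) (EE i) (deg_RL V E R r') (\<rho> \<circ> inv_into (C.Wc i) h)"
      unfolding VV_def EE_def by (rule rank_ok_iso[OF hinj C.Ec_sub C.Wc_fin \<rho>])
    moreover have "finite (VV i)" unfolding VV_def using C.Wc_fin by simp
    ultimately show "degeneracy (VV i) (EE i) \<le> deg_RL V E R r'" using degeneracy_le by blast
  qed
  then show ?thesis by blast
qed

end
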